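(* Let $\Omega\subset\mathbb{R}$ be a bounded open interval and let $\varphi\in C^1(\overline\Omega)$ satisfy $\varphi>0$ in $\overline\Omega$. (i) For all $p>0$ and $q>0$, $$\int_\Omega\varphi^{-p}\le q^{\frac{2p}{q}}|\Omega|^{\frac{p+q}{q}}\Big\{\int_\Omega\varphi^{-q-2}\varphi_x^2\Big\}^{\frac pq}+2^{\frac{2p}{q}}|\Omega|^{p+1}\Big\{\int_\Omega\varphi\Big\}^{-p}.$$ (ii) The inequality $$-\int_\Omega\ln\varphi\le|\Omega|^{3/2}\Big\{\int_\Omega\frac{\varphi_x^2}{\varphi^2}\Big\}^{1/2}-|\Omega|\ln\Big\{\int_\Omega\varphi\Big\}+|\Omega|\ln|\Omega|$$ holds.
   Context: $|\Omega|$ denotes the length of $\Omega$. *)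

theory Defs
  imports "HOL-Analysis.Analysis"
begin

end

theory Submission
  imports Defs "HOL-Analysis.Analysis"
begin

lemma cs_bound:
  fixes g :: "real \<Rightarrow> real"
  assumes ab: "a < b" and cg: "continuous_on {a..b} g"
  shows "integral {a..b} (\<lambda>x. \<bar>g x\<bar>) \<le> sqrt ((b-a) * integral {a..b} (\<lambda>x. (g x)^2))"
proof -
  define G where "G = integral {a..b} (\<lambda>x. \<bar>g x\<bar>)"
  define S where "S = integral {a..b} (\<lambda>x. (g x)^2)"
  have ig: "(\<lambda>x. \<bar>g x\<bar>) integrable_on {a..b}"
    by (intro integrable_continuous_interval continuous_intros cg)
  have is2: "(\<lambda>x. (g x)^2) integrable_on {a..b}"
    by (intro integrable_continuous_interval continuous_intros cg)
  have G0: "G \<ge> 0" unfolding G_def by (intro integral_nonneg ig) auto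
  have S0: "S \<ge> 0" unfolding S_def by (intro integral_nonneg is2) auto
  have key: "G \<le> (t * S + (b-a) / t) / 2" if t: "t > 0" for t
  proof -
    have pw: "\<bar>g x\<bar> \<le> (t * (g x)^2 + 1/t) / 2" for x
    proof -
      have "(t * (g x)^2 + 1/t)/2 - \<bar>g x\<bar> = (t*\<bar>g x\<bar> - 1)^2/(2*t)"
        using t by (simp add: field_simps power2_eq_square)
      moreover have "(t*\<bar>g x\<bar> - 1)^2/(2*t) \<ge> 0" using t by simp
      ultimately show ?thesis by linarith
    qed
    have i2: "(\<lambda>x. (t * (g x)^2 + 1/t) / 2) integrable_on {a..b}"
      by (intro integrable_continuous_interval continuous_intros cg) auto
    have "G \<le> integral {a..b} (\<lambda>x. (t * (g x)^2 + 1/t) / 2)"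
      unfolding G_def using integral_le[OF ig i2] pw by blast
    also have "\<dots> = (t * S + (b-a) / t) / 2"
      unfolding S_def using ab is2
      using integral_add[OF integrable_on_cmult_left[OF is2, of t] integrable_const_ivl[of "1/t" a b]]
      by (simp add: integral_divide integral_mult_right)
    finally show ?thesis .
  qed
  show ?thesis
  proof (cases "S = 0")
    case True
    show ?thesis
    proof (rule ccontr)
      assume "\<not> ?thesis"
      hence Gp: "G > 0" using True G_def S_def by simp
      have "G \<le> (b - a) / ((b-a)/G) / 2" using key[of "(b-a)/G"] True Gp ab by simp
      also have "\<dots> = G / 2" using Gp ab by (simp add: field_simps)
      finally show False using Gp by simp
    qed
  next
    case False
    hence Sp: "S > 0" using S0 by simp
    define t where "t = sqrt ((b-a)/S)"
    have tp: "t > 0" unfolding t_def using Sp ab by simp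
    have sS: "sqrt S * sqrt S = S" using S0 by simp
    have sSp: "sqrt S > 0" using Sp by simp
    have "t * S = sqrt ((b-a) * S)" unfolding t_def real_sqrt_divide real_sqrt_mult
      using sSp by (metis sS nonzero_mult_div_cancel_right times_divide_eq_left mult.assoc less_irrefl)
    moreover have "(b-a) / t = sqrt ((b-a) * S)" unfolding t_def real_sqrt_divide real_sqrt_mult
      using sSp ab by (metis (no_types) divide_divide_eq_right sS real_div_sqrt less_eq_real_def diff_gt_0_iff_gt times_divide_eq_left)
    ultimately show ?thesis using key[OF tp] unfolding G_def S_def by simp
  qed
qed

lemma osc_bound:
  fixes f f' :: "real \<Rightarrow> real"
  assumes ab: "a < b"
    and d: "\<And>x. x \<in> {a..b} \<Longrightarrow> (f has_real_derivative f' x) (at x within {a..b})"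
    and c: "continuous_on {a..b} f'"
    and x: "x \<in> {a..b}" and y: "y \<in> {a..b}"
  shows "f x \<le> f y + integral {a..b} (\<lambda>t. \<bar>f' t\<bar>)"
proof -
  have sub: "\<And>u v. u \<in> {a..b} \<Longrightarrow> v \<in> {a..b} \<Longrightarrow> u \<le> v \<Longrightarrow>
       (f' has_integral (f v - f u)) {u..v} \<and> integral {u..v} (\<lambda>t. \<bar>f' t\<bar>) \<le> integral {a..b} (\<lambda>t. \<bar>f' t\<bar>)
       \<and> f' integrable_on {u..v} \<and> (\<lambda>t. \<bar>f' t\<bar>) integrable_on {u..v}"
  proof -
    fix u v assume u: "u \<in> {a..b}" and v: "v \<in> {a..b}" and uv: "u \<le> v"
    have ss: "{u..v} \<subseteq> {a..b}" using u v by auto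
    have "(f' has_integral (f v - f u)) {u..v}"
    proof (rule fundamental_theorem_of_calculus[OF uv])
      fix t assume "t \<in> {u..v}"
      hence "t \<in> {a..b}" using ss by auto
      from has_field_derivative_subset[OF d[OF this] ss]
      show "(f has_vector_derivative f' t) (at t within {u..v})"
        by (simp add: has_real_derivative_iff_has_vector_derivative)
    qed
    moreover have "integral {u..v} (\<lambda>t. \<bar>f' t\<bar>) \<le> integral {a..b} (\<lambda>t. \<bar>f' t\<bar>)"
      by (rule integral_subset_le[OF ss])
        (auto intro!: integrable_continuous_interval continuous_intros
          intro: continuous_on_subset[OF c ss] c)
    moreover have "f' integrable_on {u..v}" "(\<lambda>t. \<bar>f' t\<bar>) integrable_on {u..v}"
      by (auto intro!: integrable_continuous_interval continuous_intros
          intro: continuous_on_subset[OF c ss])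
    ultimately show "(f' has_integral (f v - f u)) {u..v} \<and> integral {u..v} (\<lambda>t. \<bar>f' t\<bar>) \<le> integral {a..b} (\<lambda>t. \<bar>f' t\<bar>)
       \<and> f' integrable_on {u..v} \<and> (\<lambda>t. \<bar>f' t\<bar>) integrable_on {u..v}" by blast
  qed
  show ?thesis
  proof (cases "y \<le> x")
    case True
    note s = sub[OF y x True]
    have "f x - f y = integral {y..x} f'" using s by (metis integral_unique)
    also have "\<dots> \<le> integral {y..x} (\<lambda>t. \<bar>f' t\<bar>)" using s by (intro integral_le) auto
    finally show ?thesis using s by simp
  next
    case False
    note s = sub[OF x y, OF less_imp_le] 
    have s: "(f' has_integral (f y - f x)) {x..y} \<and> integral {x..y} (\<lambda>t. \<bar>f' t\<bar>) \<le> integral {a..b} (\<lambda>t. \<bar>f' t\<bar>)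
       \<and> f' integrable_on {x..y} \<and> (\<lambda>t. \<bar>f' t\<bar>) integrable_on {x..y}" using s False by simp
    have "f x - f y = integral {x..y} (\<lambda>t. - f' t)" using s integral_neg by (metis integral_unique minus_diff_eq)
    also have "\<dots> \<le> integral {x..y} (\<lambda>t. \<bar>f' t\<bar>)" using s by (intro integral_le) (auto intro: integrable_neg)
    finally show ?thesis using s by simp
  qed
qed

lemma powr_sum_le:
  fixes A B r :: real
  assumes "0 \<le> A" "0 \<le> B" "0 \<le> r"
  shows "(A + B) powr r \<le> 2 powr r * (A powr r + B powr r)"
proof -
  have "(A + B) powr r \<le> (2 * max A B) powr r"
    using assms by (intro powr_mono2) auto
  also have "\<dots> = 2 powr r * max A B powr r" using assms by (simp add: powr_mult)
  also have "max A B powr r \<le> A powr r + B powr r"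
    by (cases "A \<le> B") (auto simp: max_def)
  hence "2 powr r * max A B powr r \<le> 2 powr r * (A powr r + B powr r)"
    by (intro mult_left_mono) auto
  finally show ?thesis .
qed


theorem lemma5p1:
  fixes a b :: real and \<phi> \<phi>' :: "real \<Rightarrow> real"
  assumes ab: "a < b"
    and deriv: "\<And>x. x \<in> {a..b} \<Longrightarrow> (\<phi> has_real_derivative \<phi>' x) (at x within {a..b})"
    and cont_deriv: "continuous_on {a..b} \<phi>'"
    and pos: "\<And>x. x \<in> {a..b} \<Longrightarrow> \<phi> x > 0"
  shows "(\<forall>p q :: real. p > 0 \<longrightarrow> q > 0 \<longrightarrow>
            integral {a<..<b} (\<lambda>x. \<phi> x powr (-p))
              \<le> q powr (2*p/q) * (b - a) powr ((p+q)/q)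
                  * (integral {a<..<b} (\<lambda>x. \<phi> x powr (-q-2) * (\<phi>' x)^2)) powr (p/q)
                + 2 powr (2*p/q) * (b - a) powr (p+1)
                  * (integral {a<..<b} \<phi>) powr (-p))
         \<and> - integral {a<..<b} (\<lambda>x. ln (\<phi> x))
             \<le> (b - a) powr (3/2) * (integral {a<..<b} (\<lambda>x. (\<phi>' x)^2 / (\<phi> x)^2)) powr (1/2)
               - (b - a) * ln (integral {a<..<b} \<phi>) + (b - a) * ln (b - a)"
proof -
  define L where "L = b - a"
  have L: "L > 0" using ab L_def by simp
  have cphi: "continuous_on {a..b} \<phi>"
    using deriv by (meson DERIV_continuous continuous_on_eq_continuous_within)
  define I where "I = integral {a..b} \<phi>"
  obtain y where y: "y \<in> {a..b}" and ymax: "\<And>x. x \<in> {a..b} \<Longrightarrow> \<phi> x \<le> \<phi> y"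
    using continuous_attains_sup[OF compact_Icc _ cphi] ab by fastforce
  obtain z where z: "z \<in> {a..b}" and zmin: "\<And>x. x \<in> {a..b} \<Longrightarrow> \<phi> z \<le> \<phi> x"
    using continuous_attains_inf[OF compact_Icc _ cphi] ab by fastforce
  have iphi: "\<phi> integrable_on {a..b}" by (rule integrable_continuous_interval[OF cphi])
  have "I \<le> integral {a..b} (\<lambda>x. \<phi> y)" unfolding I_def
    by (rule integral_le[OF iphi integrable_const_ivl]) (use ymax in auto)
  hence Iy: "I \<le> L * \<phi> y" using ab by (simp add: L_def)
  have "integral {a..b} (\<lambda>x. \<phi> z) \<le> I" unfolding I_def
    by (rule integral_le[OF integrable_const_ivl iphi]) (use zmin in auto)
  hence "L * \<phi> z \<le> I" using ab by (simp add: L_def)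
  hence Ipos: "I > 0" using pos[OF z] L by (smt (verit) mult_pos_pos)
  have IL: "I / L \<le> \<phi> y" using Iy L by (simp add: field_simps mult.commute)
  have ILp: "I / L > 0" using Ipos L by simp
  have part1: "integral {a..b} (\<lambda>x. \<phi> x powr (-p))
              \<le> q powr (2*p/q) * L powr ((p+q)/q)
                  * (integral {a..b} (\<lambda>x. \<phi> x powr (-q-2) * (\<phi>' x)^2)) powr (p/q)
                + 2 powr (2*p/q) * L powr (p+1) * I powr (-p)" if p: "p > 0" and q: "q > 0" for p q
  proof -
    define J where "J = integral {a..b} (\<lambda>x. \<phi> x powr (-q-2) * (\<phi>' x)^2)"
    define r where "r = 2*p/q"
    have r: "r > 0" using p q r_def by simp
    define \<psi>' where "\<psi>' = (\<lambda>x. (-q/2) * \<phi> x powr (-q/2-1) * \<phi>' x)"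
    have d\<psi>: "((\<lambda>x. \<phi> x powr (-q/2)) has_real_derivative \<psi>' x) (at x within {a..b})"
      if "x \<in> {a..b}" for x
      unfolding \<psi>'_def using deriv[OF that] pos[OF that] by (auto intro!: derivative_eq_intros)
    have c\<psi>: "continuous_on {a..b} \<psi>'" unfolding \<psi>'_def
      using pos by (auto intro!: continuous_intros cphi cont_deriv) (metis less_irrefl)
    have sq: "(\<psi>' x)^2 = q^2/4 * (\<phi> x powr (-q-2) * (\<phi>' x)^2)" if "x \<in> {a..b}" for x
    proof -
      have "(\<phi> x powr (-q/2-1))^2 = \<phi> x powr (-q-2)"
        unfolding power2_eq_square powr_add[symmetric] by simp
      thus ?thesis unfolding \<psi>'_def by (simp add: power_mult_distrib power_divide)
    qed
    have int\<psi>: "integral {a..b} (\<lambda>x. (\<psi>' x)^2) = q^2/4 * J"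
    proof -
      have "integral {a..b} (\<lambda>x. (\<psi>' x)^2) = integral {a..b} (\<lambda>x. q^2/4 * (\<phi> x powr (-q-2) * (\<phi>' x)^2))"
        by (rule integral_cong) (rule sq)
      thus ?thesis unfolding J_def by simp
    qed
    have J0: "J \<ge> 0" unfolding J_def
      by (intro integral_nonneg integrable_continuous_interval; use pos in \<open>fastforce intro!: continuous_intros cphi cont_deriv\<close>)
    define A where "A = q/2 * sqrt L * sqrt J"
    define B where "B = (I/L) powr (-q/2)"
    have A0: "A \<ge> 0" unfolding A_def using q L J0 by simp
    have B0: "B \<ge> 0" unfolding B_def by simp
    have pw: "\<phi> x powr (-p) \<le> 2 powr r * A powr r + 2 powr r * B powr r" if x: "x \<in> {a..b}" for x
    proof -
      have "\<phi> x powr (-q/2) \<le> \<phi> y powr (-q/2) + integral {a..b} (\<lambda>t. \<bar>\<psi>' t\<bar>)"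
        by (rule osc_bound[OF ab d\<psi> c\<psi> x y])
      also have "integral {a..b} (\<lambda>t. \<bar>\<psi>' t\<bar>) \<le> sqrt (L * (q^2/4 * J))"
        using cs_bound[OF ab c\<psi>] int\<psi> L_def by simp
      also have "sqrt (L * (q^2/4 * J)) = A" unfolding A_def using q
        by (simp add: real_sqrt_mult real_sqrt_divide)
      also have "\<phi> y powr (-q/2) \<le> B" unfolding B_def
        by (rule powr_mono2') (use q ILp IL in auto)
      finally have le: "\<phi> x powr (-q/2) \<le> B + A" by simp
      have "\<phi> x powr (-p) = (\<phi> x powr (-q/2)) powr r"
        unfolding powr_powr r_def using q by simp
      also have "\<dots> \<le> (A + B) powr r" using le r by (intro powr_mono2) auto
      also have "\<dots> \<le> 2 powr r * (A powr r + B powr r)"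
        by (rule powr_sum_le) (use A0 B0 r in auto)
      finally show ?thesis by (simp add: algebra_simps)
    qed
    have "2 powr r * A powr r = q powr r * L powr (p/q) * J powr (p/q)"
    proof -
      have "2 powr r * A powr r = (2 * A) powr r" using A0 by (simp add: powr_mult)
      also have "2 * A = q * (sqrt L * sqrt J)" unfolding A_def by simp
      also have "(q * (sqrt L * sqrt J)) powr r = q powr r * (sqrt L powr r * sqrt J powr r)"
        using q by (simp add: powr_mult)
      also have "sqrt L powr r = L powr (p/q)" using L
        by (simp add: powr_half_sqrt[symmetric] powr_powr r_def)
      also have "sqrt J powr r = J powr (p/q)" using J0
        by (simp add: powr_half_sqrt[symmetric] powr_powr r_def)
      finally show ?thesis by simp
    qed
    moreover have "B powr r = I powr (-p) * L powr p"
      unfolding B_def powr_powr r_def using q Ipos L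
      by (simp add: powr_divide powr_minus divide_simps)
    ultimately have pw2: "\<phi> x powr (-p) \<le> q powr r * L powr (p/q) * J powr (p/q) + 2 powr r * (I powr (-p) * L powr p)"
      if "x \<in> {a..b}" for x using pw[OF that] by simp
    have "integral {a..b} (\<lambda>x. \<phi> x powr (-p)) \<le> integral {a..b} (\<lambda>x. q powr r * L powr (p/q) * J powr (p/q) + 2 powr r * (I powr (-p) * L powr p))"
      by (rule integral_le[OF _ integrable_const_ivl])
        (use pw2 pos in \<open>fastforce intro!: integrable_continuous_interval continuous_intros cphi\<close>)+
    also have "\<dots> = L * (q powr r * L powr (p/q) * J powr (p/q) + 2 powr r * (I powr (-p) * L powr p))"
      using ab L_def by simp
    also have "\<dots> = q powr r * L powr ((p+q)/q) * J powr (p/q) + 2 powr r * L powr (p+1) * I powr (-p)"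
    proof -
      have "L powr ((p+q)/q) = L powr (p/q) * L" using q L by (simp add: add_divide_distrib powr_add)
      moreover have "L powr (p+1) = L powr p * L" using L by (simp add: powr_add)
      ultimately show ?thesis by (simp add: algebra_simps)
    qed
    finally show ?thesis unfolding J_def r_def .
  qed
  define K where "K = integral {a..b} (\<lambda>x. (\<phi>' x)^2 / (\<phi> x)^2)"
  have part2: "- integral {a..b} (\<lambda>x. ln (\<phi> x)) \<le> L powr (3/2) * K powr (1/2) - L * ln I + L * ln L"
  proof -
    define g' where "g' = (\<lambda>x. - (\<phi>' x / \<phi> x))"
    have dg: "((\<lambda>x. - ln (\<phi> x)) has_real_derivative g' x) (at x within {a..b})"
      if "x \<in> {a..b}" for x
      unfolding g'_def using deriv[OF that] pos[OF that] by (auto intro!: derivative_eq_intros simp: field_simps)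
    have cg: "continuous_on {a..b} g'" unfolding g'_def
      using pos by (auto intro!: continuous_intros cphi cont_deriv) (metis less_irrefl)
    have intg: "integral {a..b} (\<lambda>x. (g' x)^2) = K" unfolding K_def g'_def by (simp add: power_divide)
    have pw: "- ln (\<phi> x) \<le> sqrt (L * K) - ln I + ln L" if x: "x \<in> {a..b}" for x
    proof -
      have "- ln (\<phi> x) \<le> - ln (\<phi> y) + integral {a..b} (\<lambda>t. \<bar>g' t\<bar>)"
        by (rule osc_bound[OF ab dg cg x y])
      also have "integral {a..b} (\<lambda>t. \<bar>g' t\<bar>) \<le> sqrt (L * K)"
        using cs_bound[OF ab cg] intg L_def by simp
      also have "- ln (\<phi> y) \<le> - ln (I / L)" using IL ILp by simp
      also have "- ln (I / L) = - ln I + ln L" using Ipos L by (simp add: ln_div)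
      finally show ?thesis by simp
    qed
    have "- integral {a..b} (\<lambda>x. ln (\<phi> x)) = integral {a..b} (\<lambda>x. - ln (\<phi> x))"
      by (simp add: integral_neg)
    also have "\<dots> \<le> integral {a..b} (\<lambda>x. sqrt (L * K) - ln I + ln L)"
      by (rule integral_le[OF _ integrable_const_ivl])
        (use pw pos in \<open>fastforce intro!: integrable_continuous_interval continuous_intros cphi\<close>)+
    also have "\<dots> = L * (sqrt (L * K) - ln I + ln L)" using ab L_def by simp
    also have "\<dots> = L powr (3/2) * K powr (1/2) - L * ln I + L * ln L"
    proof -
      have K0: "K \<ge> 0" unfolding K_def
        by (intro integral_nonneg integrable_continuous_interval; use pos in \<open>fastforce intro!: continuous_intros cphi cont_deriv\<close>)
      have "L powr (3/2) = L powr (1 + 1/2)" by simp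
      also have "\<dots> = L * sqrt L" using L
        by (simp only: powr_add powr_one powr_half_sqrt less_imp_le)
      finally have "L powr (3/2) = L * sqrt L" .
      thus ?thesis using K0 by (simp add: powr_half_sqrt real_sqrt_mult algebra_simps)
    qed
    finally show ?thesis .
  qed
  show ?thesis
    unfolding integral_open_interval_real[symmetric]
    using part1 part2 unfolding L_def I_def K_def by blast
qed

end
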